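(* Let $G$ be a finite chordal graph. Then every exposed edge of $G$ is contained in a cycle of $G$ all of whose edges are exposed edges of $G$.
   Context: All graphs are finite, undirected, simple. A graph is chordal if every induced cycle has length three. A facet edge of $G$ is an edge $xy$ such that $\{x,y\}$ is a maximal clique of $G$. An edge of $G$ is exposed if it is contained in a unique maximal clique of $G$ and it is not a facet edge. *)

theory Defs
  imports Main
begin

definition simple_graph :: "'a set \<Rightarrow> ('a \<Rightarrow> 'a \<Rightarrow> bool) \<Rightarrow> bool" where
  "simple_graph V E \<longleftrightarrow> finite V \<and> (\<forall>x y. E x y \<longrightarrow> x \<in> V \<and> y \<in> V)
     \<and> (\<forall>x y. E x y \<longrightarrow> E y x) \<and> (\<forall>x. \<not> E x x)"

definition is_cycle :: "'a set \<Rightarrow> ('a \<Rightarrow> 'a \<Rightarrow> bool) \<Rightarrow> 'a list \<Rightarrow> bool" where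
  "is_cycle V E cs \<longleftrightarrow> length cs \<ge> 3 \<and> distinct cs \<and> set cs \<subseteq> V
     \<and> (\<forall>i < length cs. E (cs ! i) (cs ! ((i + 1) mod length cs)))"

definition cycle_edge :: "'a list \<Rightarrow> 'a \<Rightarrow> 'a \<Rightarrow> bool" where
  "cycle_edge cs x y \<longleftrightarrow>
     (\<exists>i < length cs. {x, y} = {cs ! i, cs ! ((i + 1) mod length cs)})"

definition induced_cycle :: "'a set \<Rightarrow> ('a \<Rightarrow> 'a \<Rightarrow> bool) \<Rightarrow> 'a list \<Rightarrow> bool" where
  "induced_cycle V E cs \<longleftrightarrow> is_cycle V E cs
     \<and> (\<forall>i < length cs. \<forall>j < length cs. E (cs ! i) (cs ! j) \<longrightarrow> cycle_edge cs (cs ! i) (cs ! j))"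

definition chordal :: "'a set \<Rightarrow> ('a \<Rightarrow> 'a \<Rightarrow> bool) \<Rightarrow> bool" where
  "chordal V E \<longleftrightarrow> (\<forall>cs. induced_cycle V E cs \<longrightarrow> length cs = 3)"

definition clique :: "'a set \<Rightarrow> ('a \<Rightarrow> 'a \<Rightarrow> bool) \<Rightarrow> 'a set \<Rightarrow> bool" where
  "clique V E C \<longleftrightarrow> C \<subseteq> V \<and> (\<forall>x\<in>C. \<forall>y\<in>C. x \<noteq> y \<longrightarrow> E x y)"

definition maximal_clique :: "'a set \<Rightarrow> ('a \<Rightarrow> 'a \<Rightarrow> bool) \<Rightarrow> 'a set \<Rightarrow> bool" where
  "maximal_clique V E C \<longleftrightarrow> clique V E C \<and> (\<forall>D. clique V E D \<and> C \<subseteq> D \<longrightarrow> D = C)"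

definition facet_edge :: "'a set \<Rightarrow> ('a \<Rightarrow> 'a \<Rightarrow> bool) \<Rightarrow> 'a \<Rightarrow> 'a \<Rightarrow> bool" where
  "facet_edge V E x y \<longleftrightarrow> E x y \<and> maximal_clique V E {x, y}"

definition exposed_edge :: "'a set \<Rightarrow> ('a \<Rightarrow> 'a \<Rightarrow> bool) \<Rightarrow> 'a \<Rightarrow> 'a \<Rightarrow> bool" where
  "exposed_edge V E x y \<longleftrightarrow> E x y
     \<and> (\<exists>!C. maximal_clique V E C \<and> {x, y} \<subseteq> C)
     \<and> \<not> facet_edge V E x y"

end

theory Submission
  imports Defs
begin

definition simp_v :: "'a set \<Rightarrow> ('a \<Rightarrow> 'a \<Rightarrow> bool) \<Rightarrow> 'a \<Rightarrow> bool" where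
  "simp_v V E v \<longleftrightarrow> v \<in> V \<and> (\<forall>p q. E v p \<longrightarrow> E v q \<longrightarrow> p \<noteq> q \<longrightarrow> E p q)"

definition ind :: "('a \<Rightarrow> 'a \<Rightarrow> bool) \<Rightarrow> 'a set \<Rightarrow> 'a \<Rightarrow> 'a \<Rightarrow> bool" where
  "ind E W p q \<longleftrightarrow> E p q \<and> p \<in> W \<and> q \<in> W"

definition walk :: "('a \<Rightarrow> 'a \<Rightarrow> bool) \<Rightarrow> nat \<Rightarrow> (nat \<Rightarrow> 'a) \<Rightarrow> bool" where
  "walk r n f \<longleftrightarrow> (\<forall>i<n. r (f i) (f (Suc i)))"

lemma sg_ind: "simple_graph V E \<Longrightarrow> W \<subseteq> V \<Longrightarrow> simple_graph W (ind E W)"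
  unfolding simple_graph_def ind_def by (auto intro: finite_subset)

lemma chordal_ind: assumes "chordal V E" "W \<subseteq> V" shows "chordal W (ind E W)"
  unfolding chordal_def
proof (intro allI impI)
  fix cs assume h: "induced_cycle W (ind E W) cs"
  have sW: "set cs \<subseteq> W" using h unfolding induced_cycle_def is_cycle_def by auto
  have "induced_cycle V E cs"
    unfolding induced_cycle_def is_cycle_def
  proof (intro conjI allI impI)
    show "3 \<le> length cs" "distinct cs" using h unfolding induced_cycle_def is_cycle_def by auto
    show "set cs \<subseteq> V" using sW assms(2) by auto
    show "E (cs ! i) (cs ! ((i + 1) mod length cs))" if "i < length cs" for i
      using h that unfolding induced_cycle_def is_cycle_def ind_def by auto
    show "cycle_edge cs (cs ! i) (cs ! j)" if "i < length cs" "j < length cs" "E (cs ! i) (cs ! j)" for i j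
    proof -
      have "cs ! i \<in> W" "cs ! j \<in> W" using that sW nth_mem by auto
      then show ?thesis using h that unfolding induced_cycle_def ind_def by auto
    qed
  qed
  then show "length cs = 3" using assms(1) unfolding chordal_def by auto
qed

lemma exposed_iff: "exposed_edge V E a b \<longleftrightarrow> E a b \<and> (\<exists>K. maximal_clique V E K \<and> {a,b} \<subseteq> K \<and> K \<noteq> {a,b} \<and> (\<forall>K'. maximal_clique V E K' \<and> {a,b} \<subseteq> K' \<longrightarrow> K' = K))"
  (is "?L \<longleftrightarrow> ?R")
proof
  assume h: ?L
  then have e: "E a b" and u: "\<exists>!C. maximal_clique V E C \<and> {a,b} \<subseteq> C" and nf: "\<not> facet_edge V E a b"
    unfolding exposed_edge_def by auto
  from u obtain K where K: "maximal_clique V E K \<and> {a,b} \<subseteq> K" and Ku: "\<forall>y. maximal_clique V E y \<and> {a,b} \<subseteq> y \<longrightarrow> y = K"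
    by (rule ex1E)
  have "K \<noteq> {a,b}"
  proof
    assume "K = {a,b}"
    then have "facet_edge V E a b" using K e unfolding facet_edge_def by simp
    then show False using nf by simp
  qed
  then show ?R using e K Ku by blast
next
  assume h: ?R
  then obtain K where e: "E a b" and K: "maximal_clique V E K" "{a,b} \<subseteq> K" "K \<noteq> {a,b}"
     and Ku: "\<forall>K'. maximal_clique V E K' \<and> {a,b} \<subseteq> K' \<longrightarrow> K' = K"
    by blast
  have u: "\<exists>!C. maximal_clique V E C \<and> {a,b} \<subseteq> C"
  proof (rule ex1I[of _ K])
    show "maximal_clique V E K \<and> {a,b} \<subseteq> K" using K by simp
    show "\<And>y. maximal_clique V E y \<and> {a,b} \<subseteq> y \<Longrightarrow> y = K" using Ku by blast
  qed
  have nf: "\<not> facet_edge V E a b"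
  proof
    assume "facet_edge V E a b"
    then have "maximal_clique V E {a,b}" unfolding facet_edge_def by simp
    then have "{a,b} = K" using Ku by blast
    then show False using K(3) by simp
  qed
  show ?L unfolding exposed_edge_def using e u nf by blast
qed

lemma exposed_sym: assumes sg: "simple_graph V E" and h: "exposed_edge V E a b" shows "exposed_edge V E b a"
proof -
  have e: "{b,a} = {a,b}" by (rule insert_commute)
  have "E b a" using h sg unfolding exposed_edge_def simple_graph_def by blast
  moreover have "\<exists>K. maximal_clique V E K \<and> {a,b} \<subseteq> K \<and> K \<noteq> {a,b} \<and> (\<forall>K'. maximal_clique V E K' \<and> {a,b} \<subseteq> K' \<longrightarrow> K' = K)"
    using h unfolding exposed_iff by blast
  ultimately show ?thesis unfolding exposed_iff e by blast
qed

lemma max_clique_ext: assumes "finite V" "clique V E C" shows "\<exists>M. maximal_clique V E M \<and> C \<subseteq> M"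
proof -
  let ?P = "{D. clique V E D \<and> C \<subseteq> D}"
  have "?P \<subseteq> Pow V" unfolding clique_def by blast
  then have fP: "finite ?P" using assms(1) by (simp add: finite_subset)
  have nP: "?P \<noteq> {}" using assms(2) by blast
  obtain M where M: "M \<in> ?P" and Mm: "\<forall>D\<in>?P. M \<le> D \<longrightarrow> M = D"
    using finite_has_maximal[OF fP nP] by blast
  have "maximal_clique V E M" unfolding maximal_clique_def
  proof (intro conjI allI impI)
    show "clique V E M" using M by simp
    fix D assume "clique V E D \<and> M \<subseteq> D"
    then have "D \<in> ?P" using M by blast
    then show "D = M" using Mm \<open>clique V E D \<and> M \<subseteq> D\<close> by blast
  qed
  then show ?thesis using M by blast
qed

lemma simp_exposed: assumes sg: "simple_graph V E" and sv: "simp_v V E v" and h: "E v p" "E v q" "p \<noteq> q"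
  shows "exposed_edge V E v p"
proof -
  have Esym: "\<And>p q. E p q \<Longrightarrow> E q p" and Eirr: "\<And>p. \<not> E p p" and EV: "\<And>p q. E p q \<Longrightarrow> p \<in> V \<and> q \<in> V"
    using sg unfolding simple_graph_def by blast+
  have vV: "v \<in> V" and sp: "\<And>p q. E v p \<Longrightarrow> E v q \<Longrightarrow> p \<noteq> q \<Longrightarrow> E p q" using sv unfolding simp_v_def by blast+
  define K where "K = insert v {w. E v w}"
  have cl: "clique V E K" unfolding clique_def
  proof (intro conjI ballI impI)
    show "K \<subseteq> V" using vV EV unfolding K_def by blast
    fix a b assume "a \<in> K" "b \<in> K" "a \<noteq> b"
    then consider "a = v" "E v b" | "b = v" "E v a" | "E v a" "E v b" unfolding K_def by blast
    then show "E a b"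
    proof cases
      case 1 then show ?thesis by simp
    next
      case 2 then show ?thesis using Esym by simp
    next
      case 3 then show ?thesis using sp \<open>a \<noteq> b\<close> by blast
    qed
  qed
  have sub: "D \<subseteq> K" if "clique V E D" "v \<in> D" for D
  proof
    fix z assume "z \<in> D"
    show "z \<in> K"
    proof (cases "z = v")
      case True then show ?thesis unfolding K_def by simp
    next
      case False
      have cD: "\<forall>x\<in>D. \<forall>y\<in>D. x \<noteq> y \<longrightarrow> E x y" using that(1) by (simp add: clique_def)
      have "E v z" using cD that(2) \<open>z \<in> D\<close> False by auto
      then show ?thesis unfolding K_def by simp
    qed
  qed
  have mx: "maximal_clique V E K" unfolding maximal_clique_def
  proof (intro conjI allI impI)
    show "clique V E K" by (rule cl)
    fix D assume D: "clique V E D \<and> K \<subseteq> D"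
    then have "v \<in> D" unfolding K_def by blast
    then have "D \<subseteq> K" using sub D by blast
    then show "D = K" using D by blast
  qed
  have un: "\<forall>K'. maximal_clique V E K' \<and> {v,p} \<subseteq> K' \<longrightarrow> K' = K"
  proof (intro allI impI)
    fix K' assume K': "maximal_clique V E K' \<and> {v,p} \<subseteq> K'"
    then have "K' \<subseteq> K" using sub unfolding maximal_clique_def by blast
    then show "K' = K" using K' cl unfolding maximal_clique_def by blast
  qed
  have "q \<in> K" unfolding K_def using h by blast
  moreover have "q \<noteq> v" using h Eirr by blast
  ultimately have "K \<noteq> {v,p}" using h by blast
  moreover have "{v,p} \<subseteq> K" unfolding K_def using h by blast
  ultimately show ?thesis unfolding exposed_iff using mx un h by blast
qed

lemma rtranclp_walk: "r\<^sup>*\<^sup>* a b \<Longrightarrow> \<exists>n f. f 0 = a \<and> f n = b \<and> walk r n f"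
proof (induction rule: rtranclp_induct)
  case base then show ?case by (rule exI[of _ 0], rule exI[of _ "\<lambda>_. a"]) (simp add: walk_def)
next
  case (step b c)
  then obtain n f where f: "f 0 = a" "f n = b" "walk r n f" by blast
  let ?g = "f(Suc n := c)"
  have "?g 0 = a" using f by simp
  moreover have "?g (Suc n) = c" by simp
  moreover have "walk r (Suc n) ?g" using f step unfolding walk_def by (auto simp: less_Suc_eq)
  ultimately show ?case by blast
qed

lemma shortcut:
  assumes w: "walk r n f" and d: "0 < d" "a + d \<le> n"
    and st: "a + d < n \<Longrightarrow> r (f a) (f (a + d + 1))"
    and en: "a + d = n \<Longrightarrow> f a = f n"
  defines "g \<equiv> \<lambda>k. if k \<le> a then f k else f (k + d)"
  shows "walk r (n - d) g" "g 0 = f 0" "g (n - d) = f n"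
    "\<And>k. 0 < k \<Longrightarrow> k < n - d \<Longrightarrow> \<exists>k'. 0 < k' \<and> k' < n \<and> g k = f k'"
proof -
  show "walk r (n - d) g" unfolding walk_def
  proof (intro allI impI)
    fix k assume k: "k < n - d"
    show "r (g k) (g (Suc k))"
    proof (cases "k < a")
      case True then show ?thesis using w k d unfolding g_def walk_def by auto
    next
      case False
      show ?thesis
      proof (cases "k = a")
        case True then show ?thesis using st k d unfolding g_def by auto
      next
        case False
        then have "k > a" using \<open>\<not> k < a\<close> by auto
        then show ?thesis using w k d unfolding g_def walk_def by auto
      qed
    qed
  qed
  show "g 0 = f 0" unfolding g_def by simp
  show "g (n - d) = f n"
  proof (cases "n - d \<le> a")
    case True then have "a + d = n" "n - d = a" using d by auto
    then show ?thesis using en unfolding g_def by auto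
  next
    case False then show ?thesis using d unfolding g_def by auto
  qed
  show "\<exists>k'. 0 < k' \<and> k' < n \<and> g k = f k'" if "0 < k" "k < n - d" for k
  proof (cases "k \<le> a")
    case True then show ?thesis using that d unfolding g_def by auto
  next
    case False
    then have "g k = f (k + d)" "0 < k + d" "k + d < n" using that d unfolding g_def by auto
    then show ?thesis by blast
  qed
qed



lemma sep_clique:
  assumes sg: "simple_graph V E" and ch: "chordal V E"
    and B: "\<forall>b\<in>B. \<not> E c b \<and> b \<noteq> c" "B \<subseteq> V" and cV: "c \<in> V"
    and conn: "\<forall>p\<in>B. \<forall>q\<in>B. (ind E B)\<^sup>*\<^sup>* p q"
    and s: "E c s" "s \<notin> B" "s' \<in> B" "E s s'"
    and t: "E c t" "t \<notin> B" "t' \<in> B" "E t t'"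
    and st: "s \<noteq> t"
  shows "E s t"
proof (rule ccontr)
  assume nst: "\<not> E s t"
  have Esym: "\<And>p q. E p q \<Longrightarrow> E q p" and Eirr: "\<And>p. \<not> E p p" and EV: "\<And>p q. E p q \<Longrightarrow> p \<in> V \<and> q \<in> V"
    using sg unfolding simple_graph_def by blast+
  define Q where "Q n f \<longleftrightarrow> f 0 = s \<and> f n = t \<and> walk E n f \<and> (\<forall>k. 0 < k \<longrightarrow> k < n \<longrightarrow> f k \<in> B)" for n f
  have ex: "\<exists>n f. Q n f"
  proof -
    obtain m h where h: "h 0 = s'" "h m = t'" "walk (ind E B) m h" using rtranclp_walk conn s t by metis
    have hB: "h k \<in> B" if "k \<le> m" for k
    proof (cases "k < m")
      case True then show ?thesis using h(3) unfolding walk_def ind_def by auto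
    next
      case False then show ?thesis using that h t by auto
    qed
    define f where "f k = (if k = 0 then s else if k \<le> m+1 then h (k-1) else t)" for k
    have "walk E (m+2) f" unfolding walk_def
    proof (intro allI impI)
      fix k assume k: "k < m + 2"
      show "E (f k) (f (Suc k))"
      proof -
        consider "k = 0" | "0 < k" "k \<le> m" | "k = m + 1" using k by linarith
        then show ?thesis
        proof cases
          case 1 then show ?thesis using h s unfolding f_def by auto
        next
          case 2
          then have "ind E B (h (k-1)) (h k)" using h(3) unfolding walk_def
            by (metis Suc_pred' less_eq_Suc_le not_less_eq_eq)
          then show ?thesis using 2 unfolding f_def ind_def by auto
        next
          case 3 then show ?thesis using h t Esym unfolding f_def by auto
        qed
      qed
    qed
    moreover have "\<forall>k. 0 < k \<longrightarrow> k < m+2 \<longrightarrow> f k \<in> B" using hB unfolding f_def by auto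
    ultimately have "Q (m+2) f" unfolding Q_def f_def by auto
    then show ?thesis by blast
  qed
  then obtain n where "\<exists>f. Q n f" and nmin: "\<forall>m<n. \<not>(\<exists>f. Q m f)"
    using exists_least_iff[of "\<lambda>n. \<exists>f. Q n f"] by blast
  then obtain f where f: "Q n f" by blast
  have f0: "f 0 = s" and fn: "f n = t" and fw: "walk E n f" and fB: "\<And>k. 0 < k \<Longrightarrow> k < n \<Longrightarrow> f k \<in> B"
    using f unfolding Q_def by auto
  have short: False if "0 < d" "a + d \<le> n" "a + d < n \<Longrightarrow> E (f a) (f (a + d + 1))" "a + d = n \<Longrightarrow> f a = f n" for a d
  proof -
    let ?g = "\<lambda>k. if k \<le> a then f k else f (k + d)"
    note sc = shortcut[OF fw that]
    have i1: "?g 0 = s" using sc(2) f0 by simp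
    have i2: "?g (n - d) = t" using sc(3) fn by simp
    have i3: "\<forall>k. 0 < k \<longrightarrow> k < n - d \<longrightarrow> ?g k \<in> B"
    proof (intro allI impI)
      fix k assume "0 < k" "k < n - d"
      then obtain k' where "0 < k'" "k' < n" "?g k = f k'" using sc(4) by blast
      then show "?g k \<in> B" using fB by simp
    qed
    have "Q (n - d) ?g" unfolding Q_def using i1 i2 i3 sc(1) by blast
    moreover have "n - d < n" using that by auto
    ultimately show False using nmin by blast
  qed
  have n2: "n \<ge> 2"
  proof (rule ccontr)
    assume "\<not> n \<ge> 2"
    then have "n = 0 \<or> n = 1" by auto
    then show False using f0 fn fw st nst unfolding walk_def by auto
  qed
  have inj: "a = b" if "a \<le> n" "b \<le> n" "f a = f b" for a b
  proof (rule ccontr)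
    assume ne: "a \<noteq> b"
    show False
    proof (cases "a < b")
      case True
      show False
      proof (rule short[of "b - a" a])
        show "0 < b - a" "a + (b - a) \<le> n" using True that by auto
        show "E (f a) (f (a + (b - a) + 1))" if "a + (b - a) < n"
          using fw that True \<open>f a = f b\<close> unfolding walk_def by auto
        show "f a = f n" if "a + (b - a) = n" using that True \<open>f a = f b\<close> by auto
      qed
    next
      case False
      then have "b < a" using ne by auto
      show False
      proof (rule short[of "a - b" b])
        show "0 < a - b" "b + (a - b) \<le> n" using \<open>b < a\<close> that by auto
        show "E (f b) (f (b + (a - b) + 1))" if "b + (a - b) < n"
          using fw that \<open>b < a\<close> \<open>f a = f b\<close> unfolding walk_def by (metis le_add_diff_inverse less_imp_le_nat Suc_eq_plus1)
        show "f b = f n" if "b + (a - b) = n" using that \<open>b < a\<close> \<open>f a = f b\<close> by auto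
      qed
    qed
  qed
  have chord0: "b = Suc a" if "a < b" "b \<le> n" "E (f a) (f b)" for a b
  proof (rule ccontr)
    assume "b \<noteq> Suc a"
    then have "Suc a < b" using that by auto
    show False
    proof (rule short[of "b - a - 1" a])
      show "0 < b - a - 1" "a + (b - a - 1) \<le> n" using \<open>Suc a < b\<close> that by auto
      show "E (f a) (f (a + (b - a - 1) + 1))" using that \<open>Suc a < b\<close> by auto
      show "f a = f n" if "a + (b - a - 1) = n" using that \<open>Suc a < b\<close> \<open>b \<le> n\<close> by auto
    qed
  qed
  have chord: "b = Suc a \<or> a = Suc b" if "a \<le> n" "b \<le> n" "E (f a) (f b)" for a b
  proof -
    have "a \<noteq> b" using that Eirr by auto
    then consider "a < b" | "b < a" by linarith
    then show ?thesis
    proof cases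
      case 1 then show ?thesis using chord0 that by auto
    next
      case 2 then show ?thesis using chord0[of b a] that Esym by auto
    qed
  qed
  have fV: "f k \<in> V" if "k \<le> n" for k
  proof (cases "k < n")
    case True then show ?thesis using fw EV unfolding walk_def by blast
  next
    case False then show ?thesis using that fn t EV by auto
  qed
  have notc: "f k \<noteq> c" if kn: "k \<le> n" for k
  proof -
    consider "k = 0" | "k = n" | "0 < k" "k < n" using kn by linarith
    then show ?thesis
    proof cases
      case 1 then show ?thesis using f0 s Eirr by auto
    next
      case 2 then show ?thesis using fn t Eirr by auto
    next
      case 3 then show ?thesis using fB B by auto
    qed
  qed
  have noadj: "\<not> E c (f k)" if "0 < k" "k < n" for k using fB[OF that] B by auto
  define cs where "cs = c # map f [0..<Suc n]"
  have len: "length cs = n + 2" unfolding cs_def by simp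
  have nth: "cs ! k = (if k = 0 then c else f (k - 1))" if "k < n + 2" for k
  proof (cases k)
    case 0 then show ?thesis unfolding cs_def by simp
  next
    case (Suc j)
    then have "j < Suc n - 0" using that by simp
    then have "map f [0..<Suc n] ! j = f (0 + j)" by (rule nth_map_upt)
    then show ?thesis using Suc unfolding cs_def by simp
  qed
  have ce: "cycle_edge cs (cs ! k) (cs ! ((k + 1) mod length cs))" if "k < length cs" for k
    using that unfolding cycle_edge_def by blast
  have cesym: "cycle_edge cs a b \<Longrightarrow> cycle_edge cs b a" for a b
    unfolding cycle_edge_def by (metis insert_commute)
  have step: "E (cs ! i) (cs ! ((i + 1) mod length cs))" if il: "i < length cs" for i
  proof -
    consider "i = n + 1" | "i = 0" | "0 < i" "i \<le> n" using il len by linarith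
    then show ?thesis
    proof cases
      case 1
      then have "(i + 1) mod length cs = 0" using len by simp
      then show ?thesis using 1 nth fn t Esym by auto
    next
      case 2
      then have "(i + 1) mod length cs = 1" using len n2 by simp
      then show ?thesis using 2 nth f0 s n2 by auto
    next
      case 3
      then have "(i + 1) mod length cs = i + 1" using len by simp
      moreover have "E (f (i - 1)) (f (Suc (i - 1)))"
      proof -
        have "i - 1 < n" using 3 by simp
        then show ?thesis using fw unfolding walk_def by blast
      qed
      ultimately show ?thesis using 3 nth by auto
    qed
  qed
  have adjidx: "j = (i + 1) mod (n + 2) \<or> i = (j + 1) mod (n + 2)"
    if ij: "i < n + 2" "j < n + 2" "E (cs ! i) (cs ! j)" for i j
  proof -
    consider "i = 0" "j = 0" | "i = 0" "0 < j" | "0 < i" "j = 0" | "0 < i" "0 < j" by linarith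
    then show ?thesis
    proof cases
      case 1 then show ?thesis using ij nth Eirr by auto
    next
      case 2
      then have "E c (f (j - 1))" using ij nth by auto
      then have "j - 1 = 0 \<or> j - 1 = n" using noadj[of "j - 1"] ij by fastforce
      then show ?thesis using 2 n2 by auto
    next
      case 3
      then have "E c (f (i - 1))" using ij nth Esym by auto
      then have "i - 1 = 0 \<or> i - 1 = n" using noadj[of "i - 1"] ij by fastforce
      then show ?thesis using 3 n2 by auto
    next
      case 4
      then have "E (f (i - 1)) (f (j - 1))" using ij nth by auto
      then have "j - 1 = Suc (i - 1) \<or> i - 1 = Suc (j - 1)" using chord ij by auto
      then show ?thesis using 4 ij by auto
    qed
  qed
  have "induced_cycle V E cs"
    unfolding induced_cycle_def is_cycle_def
  proof (intro conjI allI impI)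
    show "3 \<le> length cs" using len n2 by auto
    have "distinct (map f [0..<Suc n])" unfolding distinct_map
      using inj by (auto simp: inj_on_def)
    moreover have "c \<notin> set (map f [0..<Suc n])"
    proof -
      have "c \<notin> f ` {0..<Suc n}"
      proof
        assume "c \<in> f ` {0..<Suc n}"
        then obtain k where "k \<in> {0..<Suc n}" "c = f k" by (rule imageE)
        then show False using notc[of k] by simp
      qed
      moreover have "set (map f [0..<Suc n]) = f ` {0..<Suc n}" by (simp only: set_map set_upt)
      ultimately show ?thesis by simp
    qed
    ultimately show "distinct cs" unfolding cs_def by simp
    show "set cs \<subseteq> V" using fV cV unfolding cs_def by auto
    show "E (cs ! i) (cs ! ((i + 1) mod length cs))" if "i < length cs" for i using step that .
    show "cycle_edge cs (cs ! i) (cs ! j)" if "i < length cs" "j < length cs" "E (cs ! i) (cs ! j)" for i j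
    proof -
      from adjidx[of i j] that len
      consider "j = (i + 1) mod length cs" | "i = (j + 1) mod length cs" by auto
      then show ?thesis
      proof cases
        case 1 then show ?thesis using ce that by auto
      next
        case 2 then show ?thesis using ce[of j] cesym that by auto
      qed
    qed
  qed
  then have "length cs = 3" using ch unfolding chordal_def by auto
  then show False using len n2 by auto
qed



lemma rtranclp_sym_ind: "(ind E B)\<^sup>*\<^sup>* p q \<Longrightarrow> (\<And>a b. E a b \<Longrightarrow> E b a) \<Longrightarrow> (ind E B)\<^sup>*\<^sup>* q p"
proof -
  assume h: "(ind E B)\<^sup>*\<^sup>* p q" and s: "\<And>a b. E a b \<Longrightarrow> E b a"
  have "symp (ind E B)" unfolding symp_def ind_def using s by blast
  then have "symp (ind E B)\<^sup>*\<^sup>*" by (rule symp_rtranclp)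
  then show ?thesis using h unfolding symp_def by blast
qed

lemma simplicial_exists:
  "simple_graph V E \<Longrightarrow> chordal V E \<Longrightarrow> c \<in> V \<Longrightarrow> d \<in> V \<Longrightarrow> d \<noteq> c \<Longrightarrow> \<not> E c d
   \<Longrightarrow> \<exists>v\<in>V. v \<noteq> c \<and> \<not> E c v \<and> simp_v V E v"
proof (induction "card V" arbitrary: V E c d rule: less_induct)
  case less
  note sg = less.prems(1) and ch = less.prems(2)
  have Esym: "\<And>p q. E p q \<Longrightarrow> E q p" and Eirr: "\<And>p. \<not> E p p" and EV: "\<And>p q. E p q \<Longrightarrow> p \<in> V \<and> q \<in> V"
    and fin: "finite V"
    using sg unfolding simple_graph_def by blast+
  define Nc where "Nc = insert c {p. E c p}"
  define Rc where "Rc p q \<longleftrightarrow> E p q \<and> p \<notin> Nc \<and> q \<notin> Nc" for p q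
  define B where "B = {w. Rc\<^sup>*\<^sup>* d w}"
  define S where "S = {q. q \<notin> B \<and> (\<exists>p\<in>B. E p q)}"
  define W where "W = B \<union> S"
  have dB: "d \<in> B" unfolding B_def by simp
  have BNc: "w \<notin> Nc" if "w \<in> B" for w
  proof -
    have "Rc\<^sup>*\<^sup>* d w" using that unfolding B_def by simp
    then show ?thesis
    proof (induction rule: rtranclp_induct)
      case base then show ?case using less.prems unfolding Nc_def by auto
    next
      case (step y z) then show ?case unfolding Rc_def by auto
    qed
  qed
  have BV: "B \<subseteq> V"
  proof
    fix w assume "w \<in> B"
    then have "Rc\<^sup>*\<^sup>* d w" unfolding B_def by simp
    then show "w \<in> V"
    proof (cases rule: rtranclp.cases)
      case rtrancl_refl then show ?thesis using less.prems by simp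
    next
      case (rtrancl_into_rtrancl b) then show ?thesis using EV unfolding Rc_def by blast
    qed
  qed
  have Bcl: "q \<in> B" if "p \<in> B" "E p q" "q \<notin> Nc" for p q
  proof -
    have "Rc p q" using that BNc unfolding Rc_def by auto
    moreover have "Rc\<^sup>*\<^sup>* d p" using that(1) unfolding B_def by simp
    ultimately have "Rc\<^sup>*\<^sup>* d q" by (rule rtranclp.rtrancl_into_rtrancl[rotated])
    then show ?thesis unfolding B_def by simp
  qed
  have Sn: "E c q" if qS: "q \<in> S" for q
  proof -
    obtain p where p: "p \<in> B" "E p q" "q \<notin> B" using qS unfolding S_def by auto
    then have "q \<in> Nc" using Bcl by blast
    moreover have "q \<noteq> c" using p BNc Esym unfolding Nc_def by auto
    ultimately show ?thesis unfolding Nc_def by auto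
  qed
  have SV: "S \<subseteq> V" using Sn EV by blast
  have cW: "c \<notin> W" using BNc Sn Eirr unfolding W_def Nc_def by auto
  have WV: "W \<subseteq> V" using BV SV unfolding W_def by auto
  have cardW: "card W < card V"
  proof -
    have "W \<subset> V" using WV cW less.prems(3) by auto
    then show ?thesis using fin by (rule psubset_card_mono[rotated])
  qed
  have reach: "(ind E B)\<^sup>*\<^sup>* d w" if "Rc\<^sup>*\<^sup>* d w" for w
    using that
  proof (induction rule: rtranclp_induct)
    case base then show ?case by simp
  next
    case (step y z)
    have "Rc\<^sup>*\<^sup>* d z" using step(1,2) by (rule rtranclp.rtrancl_into_rtrancl)
    then have "y \<in> B" "z \<in> B" using step(1) unfolding B_def by auto
    then have "ind E B y z" using step(2) unfolding Rc_def ind_def by auto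
    with step(3) show ?case by (rule rtranclp.rtrancl_into_rtrancl)
  qed
  have conn: "\<forall>p\<in>B. \<forall>q\<in>B. (ind E B)\<^sup>*\<^sup>* p q"
  proof (intro ballI)
    fix p q assume "p \<in> B" "q \<in> B"
    then have "(ind E B)\<^sup>*\<^sup>* d p" "(ind E B)\<^sup>*\<^sup>* d q" using reach unfolding B_def by auto
    then have "(ind E B)\<^sup>*\<^sup>* p d" "(ind E B)\<^sup>*\<^sup>* d q" using rtranclp_sym_ind[of E B d p] Esym by auto
    then show "(ind E B)\<^sup>*\<^sup>* p q" by (rule rtranclp_trans)
  qed
  have Bprop: "\<forall>b\<in>B. \<not> E c b \<and> b \<noteq> c" using BNc unfolding Nc_def by auto
  have Scl: "E s t" if "s \<in> S" "t \<in> S" "s \<noteq> t" for s t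
  proof -
    from that(1) obtain s' where s0: "s' \<in> B" "E s' s" "s \<notin> B" unfolding S_def by auto
    from that(2) obtain t' where t0: "t' \<in> B" "E t' t" "t \<notin> B" unfolding S_def by auto
    have s': "s' \<in> B" "E s s'" "s \<notin> B" using s0 Esym by auto
    have t': "t' \<in> B" "E t t'" "t \<notin> B" using t0 Esym by auto
    show ?thesis
      by (rule sep_clique[OF sg ch Bprop BV less.prems(3) conn Sn[OF that(1)] s'(3) s'(1) s'(2)
          Sn[OF that(2)] t'(3) t'(1) t'(2) that(3)])
  qed
  have NB: "p \<in> W" if "v \<in> B" "E v p" for v p
    using that unfolding W_def S_def by auto
  show ?case
  proof (cases "\<forall>p\<in>W. \<forall>q\<in>W. p \<noteq> q \<longrightarrow> E p q")
    case True
    have "simp_v V E d" unfolding simp_v_def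
    proof (intro conjI allI impI)
      show "d \<in> V" using less.prems(4) .
      fix p q assume "E d p" "E d q" "p \<noteq> q"
      then have "p \<in> W" "q \<in> W" using NB dB by auto
      then show "E p q" using True \<open>p \<noteq> q\<close> by blast
    qed
    then show ?thesis using less.prems by blast
  next
    case False
    then obtain c' d' where cd: "c' \<in> W" "d' \<in> W" "c' \<noteq> d'" "\<not> E c' d'" by blast
    have sgW: "simple_graph W (ind E W)" using sg WV by (rule sg_ind)
    have chW: "chordal W (ind E W)" using ch WV by (rule chordal_ind)
    have IH: "\<exists>v\<in>W. v \<noteq> c0 \<and> \<not> ind E W c0 v \<and> simp_v W (ind E W) v"
      if "c0 \<in> W" "d0 \<in> W" "d0 \<noteq> c0" "\<not> ind E W c0 d0" for c0 d0
      using less.hyps[OF cardW sgW chW that] .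
    obtain v where v: "v \<in> W" "simp_v W (ind E W) v" "v \<in> B"
    proof (cases "\<exists>s\<in>S. \<exists>t\<in>W. t \<noteq> s \<and> \<not> E s t")
      case True
      then obtain s0 t0 where st0: "s0 \<in> S" "t0 \<in> W" "t0 \<noteq> s0" "\<not> E s0 t0" by blast
      then have "s0 \<in> W" unfolding W_def by auto
      then obtain v where v: "v \<in> W" "v \<noteq> s0" "\<not> ind E W s0 v" "simp_v W (ind E W) v"
      proof -
        have "\<not> ind E W s0 t0" using st0 unfolding ind_def by auto
        then show ?thesis using IH[of s0 t0] st0 \<open>s0 \<in> W\<close> that by blast
      qed
      have "v \<in> B"
      proof (rule ccontr)
        assume "v \<notin> B"
        then have "v \<in> S" using v unfolding W_def by auto
        then have "E s0 v" using Scl st0 v by auto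
        then show False using v \<open>s0 \<in> W\<close> unfolding ind_def by auto
      qed
      then show ?thesis using that v by blast
    next
      case False
      obtain v where v: "v \<in> W" "v \<noteq> c'" "\<not> ind E W c' v" "simp_v W (ind E W) v"
      proof -
        have "\<not> ind E W c' d'" using cd unfolding ind_def by auto
        then show ?thesis using IH[of c' d'] cd that by blast
      qed
      have "v \<in> B"
      proof (rule ccontr)
        assume "v \<notin> B"
        then have "v \<in> S" using v unfolding W_def by auto
        then have "E v c'" using False cd v by auto
        then show False using v cd Esym unfolding ind_def by auto
      qed
      then show ?thesis using that v by blast
    qed
    have "simp_v V E v" unfolding simp_v_def
    proof (intro conjI allI impI)
      show "v \<in> V" using v BV by auto
      fix p q assume "E v p" "E v q" "p \<noteq> q"
      then have "p \<in> W" "q \<in> W" using NB v by auto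
      then have "ind E W v p" "ind E W v q" using \<open>E v p\<close> \<open>E v q\<close> v unfolding ind_def by auto
      then have "ind E W p q" using v(2) \<open>p \<noteq> q\<close> unfolding simp_v_def by blast
      then show "E p q" unfolding ind_def by auto
    qed
    moreover have "v \<noteq> c" "\<not> E c v" using BNc v unfolding Nc_def by auto
    ultimately show ?thesis using v BV by blast
  qed
qed



lemma clique_ind: "W \<subseteq> V \<Longrightarrow> clique W (ind E W) D \<longleftrightarrow> clique V E D \<and> D \<subseteq> W"
  unfolding clique_def ind_def by auto

lemma exp_down:
  assumes sg: "simple_graph V E" and vV: "v \<in> V" and h: "exposed_edge V E a b"
    and nv: "\<not> (E v a \<and> E v b)" and av: "a \<noteq> v" and bv: "b \<noteq> v"
  shows "exposed_edge (V - {v}) (ind E (V - {v})) a b"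
proof -
  have EV: "\<And>p q. E p q \<Longrightarrow> p \<in> V \<and> q \<in> V" and fin: "finite V"
    using sg unfolding simple_graph_def by blast+
  obtain C where e: "E a b" and C: "maximal_clique V E C" "{a,b} \<subseteq> C" "C \<noteq> {a,b}"
    and Cu: "\<forall>K'. maximal_clique V E K' \<and> {a,b} \<subseteq> K' \<longrightarrow> K' = C"
    using h unfolding exposed_iff by blast
  have sub: "V - {v} \<subseteq> V" by blast
  have Ccl: "clique V E C" using C(1) by (simp add: maximal_clique_def)
  have vC: "v \<notin> C"
  proof
    assume "v \<in> C"
    have cC: "\<forall>p\<in>C. \<forall>q\<in>C. p \<noteq> q \<longrightarrow> E p q" using Ccl by (simp add: clique_def)
    have "a \<in> C" "b \<in> C" using C(2) by auto
    then have "E v a" "E v b" using cC \<open>v \<in> C\<close> av bv by auto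
    then show False using nv by simp
  qed
  have CV: "C \<subseteq> V" using Ccl by (simp add: clique_def)
  have C': "clique (V - {v}) (ind E (V - {v})) C" using clique_ind[OF sub] Ccl CV vC by auto
  have Cm: "maximal_clique (V - {v}) (ind E (V - {v})) C" unfolding maximal_clique_def
  proof (intro conjI allI impI)
    show "clique (V - {v}) (ind E (V - {v})) C" by (rule C')
    fix D assume D: "clique (V - {v}) (ind E (V - {v})) D \<and> C \<subseteq> D"
    then have "clique V E D" using clique_ind[OF sub] by auto
    then show "D = C" using C(1) D unfolding maximal_clique_def by auto
  qed
  have uq: "\<forall>K'. maximal_clique (V - {v}) (ind E (V - {v})) K' \<and> {a,b} \<subseteq> K' \<longrightarrow> K' = C"
  proof (intro allI impI)
    fix K' assume K': "maximal_clique (V - {v}) (ind E (V - {v})) K' \<and> {a,b} \<subseteq> K'"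
    then have K'c: "clique (V - {v}) (ind E (V - {v})) K'" by (simp add: maximal_clique_def)
    then have "clique V E K'" using clique_ind[OF sub] by auto
    then obtain M where M: "maximal_clique V E M" "K' \<subseteq> M" using max_clique_ext[OF fin] by blast
    then have "M = C" using Cu K' by auto
    then have "K' \<subseteq> C" using M by simp
    then show "K' = C" using K' C' unfolding maximal_clique_def by auto
  qed
  have "ind E (V - {v}) a b" using e EV av bv unfolding ind_def by auto
  then show ?thesis unfolding exposed_iff using Cm C(2,3) uq by blast
qed

lemma exp_up:
  assumes sg: "simple_graph V E" and vV: "v \<in> V" and h: "exposed_edge (V - {v}) (ind E (V - {v})) a b"
    and nv: "\<not> (E v a \<and> E v b)"
  shows "exposed_edge V E a b"
proof -
  have sub: "V - {v} \<subseteq> V" by blast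
  obtain D where e: "ind E (V - {v}) a b" and D: "maximal_clique (V - {v}) (ind E (V - {v})) D" "{a,b} \<subseteq> D" "D \<noteq> {a,b}"
    and Du: "\<forall>K'. maximal_clique (V - {v}) (ind E (V - {v})) K' \<and> {a,b} \<subseteq> K' \<longrightarrow> K' = D"
    using h unfolding exposed_iff by blast
  have eab: "E a b" "a \<noteq> v" "b \<noteq> v" using e unfolding ind_def by auto
  have key: "v \<notin> M" if "clique V E M" "{a,b} \<subseteq> M" for M
  proof
    assume "v \<in> M"
    have cM: "\<forall>p\<in>M. \<forall>q\<in>M. p \<noteq> q \<longrightarrow> E p q" using that(1) by (simp add: clique_def)
    have "a \<in> M" "b \<in> M" using that(2) by auto
    then have "E v a" "E v b" using cM \<open>v \<in> M\<close> eab by auto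
    then show False using nv by simp
  qed
  have Dc': "clique (V - {v}) (ind E (V - {v})) D" using D(1) by (simp add: maximal_clique_def)
  have Dc: "clique V E D" using Dc' clique_ind[OF sub] by auto
  have lift: "clique (V - {v}) (ind E (V - {v})) M" if "clique V E M" "{a,b} \<subseteq> M" for M
  proof -
    have "v \<notin> M" using key that by blast
    moreover have "M \<subseteq> V" using that(1) by (simp add: clique_def)
    ultimately have "M \<subseteq> V - {v}" by blast
    then show ?thesis using clique_ind[OF sub] that(1) by auto
  qed
  have Dm: "maximal_clique V E D" unfolding maximal_clique_def
  proof (intro conjI allI impI)
    show "clique V E D" by (rule Dc)
    fix D2 assume D2: "clique V E D2 \<and> D \<subseteq> D2"
    then have "clique (V - {v}) (ind E (V - {v})) D2" using lift D(2) by blast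
    then show "D2 = D" using D(1) D2 unfolding maximal_clique_def by auto
  qed
  have uq: "\<forall>K'. maximal_clique V E K' \<and> {a,b} \<subseteq> K' \<longrightarrow> K' = D"
  proof (intro allI impI)
    fix M assume M: "maximal_clique V E M \<and> {a,b} \<subseteq> M"
    then have Mc: "clique V E M" by (simp add: maximal_clique_def)
    have Mc': "clique (V - {v}) (ind E (V - {v})) M" using lift Mc M by blast
    have "maximal_clique (V - {v}) (ind E (V - {v})) M" unfolding maximal_clique_def
    proof (intro conjI allI impI)
      show "clique (V - {v}) (ind E (V - {v})) M" by (rule Mc')
      fix D3 assume D3: "clique (V - {v}) (ind E (V - {v})) D3 \<and> M \<subseteq> D3"
      then have "clique V E D3" using clique_ind[OF sub] by auto
      then show "D3 = M" using M D3 unfolding maximal_clique_def by auto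
    qed
    then show "M = D" using Du M by blast
  qed
  show ?thesis unfolding exposed_iff using eab(1) Dm D(2,3) uq by blast
qed

lemma sv_exists:
  assumes sg: "simple_graph V E" and ch: "chordal V E" and e: "E x y" and z: "z \<in> V" "z \<noteq> x" "z \<noteq> y"
  shows "\<exists>v\<in>V. v \<noteq> x \<and> v \<noteq> y \<and> simp_v V E v"
proof -
  have Esym: "\<And>p q. E p q \<Longrightarrow> E q p" and EV: "\<And>p q. E p q \<Longrightarrow> p \<in> V \<and> q \<in> V"
    using sg unfolding simple_graph_def by blast+
  show ?thesis
  proof (cases "\<forall>p\<in>V. \<forall>q\<in>V. p \<noteq> q \<longrightarrow> E p q")
    case True
    have "simp_v V E z" unfolding simp_v_def
    proof (intro conjI allI impI)
      show "z \<in> V" by (rule z(1))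
      fix p q assume "E z p" "E z q" "p \<noteq> q"
      then have "p \<in> V" "q \<in> V" using EV by blast+
      then show "E p q" using True \<open>p \<noteq> q\<close> by blast
    qed
    then show ?thesis using z by blast
  next
    case False
    then obtain c d where cd: "c \<in> V" "d \<in> V" "c \<noteq> d" "\<not> E c d" by blast
    have xV: "x \<in> V" and yV: "y \<in> V" using EV e by blast+
    show ?thesis
    proof (cases "\<exists>d\<in>V. d \<noteq> x \<and> \<not> E x d")
      case True
      then obtain d0 where "d0 \<in> V" "d0 \<noteq> x" "\<not> E x d0" by blast
      then obtain v where v: "v \<in> V" "v \<noteq> x" "\<not> E x v" "simp_v V E v"
        using simplicial_exists[OF sg ch xV] by blast
      then have "v \<noteq> y" using e by blast
      then show ?thesis using v by blast
    next
      case nx: False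
      show ?thesis
      proof (cases "\<exists>d\<in>V. d \<noteq> y \<and> \<not> E y d")
        case True
        then obtain d0 where "d0 \<in> V" "d0 \<noteq> y" "\<not> E y d0" by blast
        then obtain v where v: "v \<in> V" "v \<noteq> y" "\<not> E y v" "simp_v V E v"
          using simplicial_exists[OF sg ch yV] by blast
        then have "v \<noteq> x" using e Esym by blast
        then show ?thesis using v by blast
      next
        case ny: False
        have "c \<noteq> x"
        proof
          assume "c = x"
          then have "d \<in> V \<and> d \<noteq> x \<and> \<not> E x d" using cd by auto
          then show False using nx by blast
        qed
        have "c \<noteq> y"
        proof
          assume "c = y"
          then have "d \<in> V \<and> d \<noteq> y \<and> \<not> E y d" using cd by auto
          then show False using ny by blast
        qed
        obtain v where v: "v \<in> V" "v \<noteq> c" "\<not> E c v" "simp_v V E v"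
          using simplicial_exists[OF sg ch cd(1) cd(2)] cd(3,4) by metis
        have "E x c" using nx cd(1) \<open>c \<noteq> x\<close> by blast
        then have "v \<noteq> x" using v Esym by blast
        have "E y c" using ny cd(1) \<open>c \<noteq> y\<close> by blast
        then have "v \<noteq> y" using v Esym by blast
        show ?thesis using v \<open>v \<noteq> x\<close> \<open>v \<noteq> y\<close> by blast
      qed
    qed
  qed
qed



lemma cut_lemma:
  "simple_graph V E \<Longrightarrow> chordal V E \<Longrightarrow> exposed_edge V E x y \<Longrightarrow> x \<in> S \<Longrightarrow> y \<notin> S
   \<Longrightarrow> \<exists>u w. u \<in> S \<and> w \<notin> S \<and> exposed_edge V E u w \<and> (u \<noteq> x \<or> w \<noteq> y)"
proof (induction "card V" arbitrary: V E rule: less_induct)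
  case less
  note sg = less.prems(1) and ch = less.prems(2) and ex = less.prems(3) and xS = less.prems(4) and yS = less.prems(5)
  have Esym: "\<And>p q. E p q \<Longrightarrow> E q p" and Eirr: "\<And>p. \<not> E p p" and EV: "\<And>p q. E p q \<Longrightarrow> p \<in> V \<and> q \<in> V"
    and fin: "finite V"
    using sg unfolding simple_graph_def by blast+
  obtain C where e: "E x y" and C: "maximal_clique V E C" "{x,y} \<subseteq> C" "C \<noteq> {x,y}"
    using ex unfolding exposed_iff by blast
  obtain z where z: "z \<in> C" "z \<noteq> x" "z \<noteq> y" using C(2,3) by blast
  have "C \<subseteq> V" using C(1) by (simp add: maximal_clique_def clique_def)
  then have zV: "z \<in> V" using z by blast
  obtain v where v: "v \<in> V" "v \<noteq> x" "v \<noteq> y" "simp_v V E v"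
    using sv_exists[OF sg ch e zV z(2,3)] by blast
  have alt: "\<exists>u w. u \<in> S \<and> w \<notin> S \<and> exposed_edge V E u w \<and> (u \<noteq> x \<or> w \<noteq> y)"
    if pq: "E v p" "E v q" "p \<noteq> q" "p \<in> S" "q \<notin> S" for p q
  proof (cases "v \<in> S")
    case True
    have "exposed_edge V E v q" using simp_exposed[OF sg v(4) pq(2) pq(1)] pq(3) by blast
    then show ?thesis using True pq v(2) by blast
  next
    case False
    have "exposed_edge V E v p" using simp_exposed[OF sg v(4) pq(1) pq(2) pq(3)] .
    then have "exposed_edge V E p v" using exposed_sym[OF sg] by blast
    then show ?thesis using False pq v(3) by blast
  qed
  show ?case
  proof (cases "E v x \<and> E v y")
    case True
    have "x \<noteq> y" using e Eirr by blast
    then show ?thesis using alt[of x y] True xS yS by blast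
  next
    case False
    have ex': "exposed_edge (V - {v}) (ind E (V - {v})) x y"
      using exp_down[OF sg v(1) ex False] v(2,3) by metis
    have card: "card (V - {v}) < card V" by (rule card_Diff1_less[OF fin v(1)])
    have sg': "simple_graph (V - {v}) (ind E (V - {v}))" using sg_ind[OF sg] by blast
    have ch': "chordal (V - {v}) (ind E (V - {v}))" using chordal_ind[OF ch] by blast
    obtain u w where uw: "u \<in> S" "w \<notin> S" "exposed_edge (V - {v}) (ind E (V - {v})) u w" "u \<noteq> x \<or> w \<noteq> y"
      using less.hyps[OF card sg' ch' ex' xS yS] by blast
    show ?thesis
    proof (cases "E v u \<and> E v w")
      case True
      have "ind E (V - {v}) u w" using uw(3) unfolding exposed_edge_def by blast
      then have "u \<noteq> w" using Eirr unfolding ind_def by blast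
      then show ?thesis using alt[of u w] True uw by blast
    next
      case False
      have "exposed_edge V E u w" using exp_up[OF sg v(1) uw(3) False] .
      then show ?thesis using uw by blast
    qed
  qed
qed

theorem theorem2p12:
  fixes V :: "'a set" and E :: "'a \<Rightarrow> 'a \<Rightarrow> bool" and x y :: 'a
  assumes "simple_graph V E"
    and "chordal V E"
    and "exposed_edge V E x y"
  shows "\<exists>cs. is_cycle V E cs \<and> cycle_edge cs x y
           \<and> (\<forall>u v. cycle_edge cs u v \<longrightarrow> exposed_edge V E u v)"
proof -
  note sg = assms(1) and ch = assms(2) and ex = assms(3)
  have Esym: "\<And>p q. E p q \<Longrightarrow> E q p" and Eirr: "\<And>p. \<not> E p p" and EV: "\<And>p q. E p q \<Longrightarrow> p \<in> V \<and> q \<in> V"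
    using sg unfolding simple_graph_def by blast+
  have exE: "\<And>p q. exposed_edge V E p q \<Longrightarrow> E p q" unfolding exposed_edge_def by blast
  define R where "R p q \<longleftrightarrow> exposed_edge V E p q \<and> {p,q} \<noteq> {x,y}" for p q
  have Rxy: "R\<^sup>*\<^sup>* x y"
  proof (rule ccontr)
    assume nr: "\<not> R\<^sup>*\<^sup>* x y"
    have xS: "x \<in> {w. R\<^sup>*\<^sup>* x w}" by simp
    have yS: "y \<notin> {w. R\<^sup>*\<^sup>* x w}" using nr by simp
    obtain u w where uw: "u \<in> {w. R\<^sup>*\<^sup>* x w}" "w \<notin> {w. R\<^sup>*\<^sup>* x w}" "exposed_edge V E u w" "u \<noteq> x \<or> w \<noteq> y"
      using cut_lemma[OF sg ch ex xS yS] by blast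
    have "{u,w} \<noteq> {x,y}"
    proof
      assume "{u,w} = {x,y}"
      then have "(u = x \<and> w = y) \<or> (u = y \<and> w = x)" by (simp add: doubleton_eq_iff)
      moreover have "u \<noteq> y" using uw(1) yS by blast
      ultimately show False using uw(4) by blast
    qed
    then have "R u w" unfolding R_def using uw(3) by blast
    moreover have "R\<^sup>*\<^sup>* x u" using uw(1) by simp
    ultimately have "R\<^sup>*\<^sup>* x w" by (rule rtranclp.rtrancl_into_rtrancl[rotated])
    then show False using uw(2) by simp
  qed
  define P where "P n \<longleftrightarrow> (\<exists>f. f 0 = x \<and> f n = y \<and> walk R n f)" for n
  have "\<exists>n. P n" unfolding P_def using rtranclp_walk[OF Rxy] by blast
  then obtain n where Pn: "P n" and nmin: "\<forall>m<n. \<not> P m"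
    using exists_least_iff[of P] by blast
  then obtain f where f0: "f 0 = x" and fn: "f n = y" and fw: "walk R n f" unfolding P_def by blast
  have inj: "a = b" if ab: "a \<le> n" "b \<le> n" "f a = f b" for a b
  proof (rule ccontr)
    assume ne: "a \<noteq> b"
    have gen: False if lt: "a' < b'" "b' \<le> n" "f a' = f b'" for a' b'
    proof -
      have d: "0 < b' - a'" "a' + (b' - a') \<le> n" using lt by auto
      have st: "R (f a') (f (a' + (b' - a') + 1))" if "a' + (b' - a') < n"
      proof -
        have "b' < n" using that lt by simp
        then have "R (f b') (f (Suc b'))" using fw unfolding walk_def by blast
        then show ?thesis using lt by simp
      qed
      have en: "f a' = f n" if "a' + (b' - a') = n" using that lt by simp
      note sc = shortcut[OF fw d st en]
      let ?g = "\<lambda>k. if k \<le> a' then f k else f (k + (b' - a'))"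
      have i1: "?g 0 = x" using sc(2) f0 by simp
      have i2: "?g (n - (b' - a')) = y" using sc(3) fn by simp
      have i3: "walk R (n - (b' - a')) ?g" using sc(1) by blast
      have "P (n - (b' - a'))" unfolding P_def
        by (intro exI[of _ ?g] conjI; (rule i1 | rule i2 | rule i3))
      moreover have "n - (b' - a') < n" using lt by simp
      ultimately show False using nmin by blast
    qed
    show False
    proof (cases "a < b")
      case True then show False using gen[of a b] ab by blast
    next
      case False then have "b < a" using ne by simp
      then show False using gen[of b a] ab by simp
    qed
  qed
  have n2: "2 \<le> n"
  proof (rule ccontr)
    assume "\<not> 2 \<le> n"
    then have "n = 0 \<or> n = 1" by auto
    moreover have "n \<noteq> 0"
    proof
      assume "n = 0"
      then have "x = y" using f0 fn by simp
      then show False using Eirr exE[OF ex] by simp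
    qed
    moreover have "n \<noteq> 1"
    proof
      assume "n = 1"
      then have "R (f 0) (f 1)" using fw unfolding walk_def by simp
      then show False using f0 fn \<open>n = 1\<close> unfolding R_def by simp
    qed
    ultimately show False by blast
  qed
  define cs where "cs = map f [0..<Suc n]"
  have len: "length cs = n + 1" unfolding cs_def by simp
  have nth: "cs ! k = f k" if "k < n + 1" for k
  proof -
    have "k < Suc n - 0" using that by simp
    then have "map f [0..<Suc n] ! k = f (0 + k)" by (rule nth_map_upt)
    then show ?thesis unfolding cs_def by simp
  qed
  have expo: "exposed_edge V E (cs ! k) (cs ! ((k + 1) mod length cs))" if kl: "k < length cs" for k
  proof (cases "k < n")
    case True
    then have "(k + 1) mod length cs = Suc k" using len by simp
    moreover have "R (f k) (f (Suc k))" using fw True unfolding walk_def by blast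
    ultimately show ?thesis using nth True len unfolding R_def by simp
  next
    case False
    then have "k = n" using kl len by simp
    then have "(k + 1) mod length cs = 0" using len by simp
    moreover have "exposed_edge V E y x" using exposed_sym[OF sg ex] .
    ultimately show ?thesis using nth \<open>k = n\<close> f0 fn by simp
  qed
  have "is_cycle V E cs" unfolding is_cycle_def
  proof (intro conjI allI impI)
    show "3 \<le> length cs" using len n2 by simp
    have "inj_on f (set [0..<Suc n])" unfolding inj_on_def using inj by auto
    then show "distinct cs" unfolding cs_def by (simp add: distinct_map del: upt_Suc)
    show "set cs \<subseteq> V"
    proof
      fix p assume "p \<in> set cs"
      then obtain k where k: "k < length cs" "p = cs ! k" by (metis in_set_conv_nth)
      then show "p \<in> V" using expo[OF k(1)] exE EV by blast
    qed
    show "E (cs ! i) (cs ! ((i + 1) mod length cs))" if "i < length cs" for i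
      using expo[OF that] exE by blast
  qed
  moreover have "cycle_edge cs x y"
  proof -
    have "n < length cs" "(n + 1) mod length cs = 0" using len by auto
    moreover have "{x, y} = {cs ! n, cs ! 0}" using nth[of n] nth[of 0] f0 fn by auto
    ultimately show ?thesis unfolding cycle_edge_def by metis
  qed
  moreover have "\<forall>u v. cycle_edge cs u v \<longrightarrow> exposed_edge V E u v"
  proof (intro allI impI)
    fix u v assume "cycle_edge cs u v"
    then obtain i where i: "i < length cs" "{u, v} = {cs ! i, cs ! ((i + 1) mod length cs)}"
      unfolding cycle_edge_def by blast
    then have "(u = cs ! i \<and> v = cs ! ((i + 1) mod length cs)) \<or> (u = cs ! ((i + 1) mod length cs) \<and> v = cs ! i)"
      by (simp add: doubleton_eq_iff)
    then show "exposed_edge V E u v" using expo[OF i(1)] exposed_sym[OF sg] by blast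
  qed
  ultimately show ?thesis by blast
qed


end
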